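(* For each $D\in\mathbb N$ let $H^{(D)}$ be a random Hermitian $D\times D$ matrix satisfying Assumptions S1–S4, with an orthonormal eigenbasis $\phi_1,\dots,\phi_D$, and let $D_0:(0,\infty)^2\to\mathbb N$ be a function such that for all $\tau,\alpha>0$, all $D\ge D_0(\tau,\alpha)$ and all $n\in[D]$, $\mathbb P(\|\phi_n\|_\infty>D^{\tau-1/2})\le D^{-\alpha}$ (such a function exists by the Ajanki–Erdős–Krüger delocalization theorem). Let $\tau>0$, $\alpha>1$, $D\ge D_0(\tau,\alpha)$, and let $B$ be a Hermitian $D\times D$ matrix. Then with probability at least $1-D^{-\alpha+1}$, for every macro state $\mu$, $$|M_{\mu B}|\ge\max\Bigl\{b^+_{\min},\frac{\mathrm{tr}(B^+)}{d_\mu}\Bigl(1-\frac{D-d_\mu}{D^{1-2\tau}}\Bigr)\Bigr\}-\min\Bigl\{b^-_{\max},\frac{\mathrm{tr}(B^-)}{d_\mu}\Bigr\},$$ and for all macro states $\mu,\nu$, $$M_{\mu\nu}\ge\frac{d_\nu}{d_\mu}\Bigl(1-\frac{D-d_\mu}{D^{1-2\tau}}\Bigr)\quad\text{and}\quad M_{\mu\nu}\ge1-\frac{D-d_\nu}{D^{1-2\tau}}.$$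
   Context: Setting: $\mathcal H=\mathbb C^D$ with standard basis; $[D]$ partitioned into consecutive blocks $I_\nu$ (macro states), $\mathcal H_\nu=\mathrm{span}\{|j\rangle:j\in I_\nu\}$, $d_\nu=\dim\mathcal H_\nu$, $P_\nu$ orthogonal projection. Here $M_{\mu B}=\frac1{d_\mu}\sum_{n=1}^D\langle\phi_n|P_\mu|\phi_n\rangle\langle\phi_n|B|\phi_n\rangle$ and $M_{\mu\nu}=M_{\mu P_\nu}$ (for non-degenerate $H$ this equals $\frac1{d_\mu}\sum_e\mathrm{tr}(P_\mu\Pi_eB\Pi_e)$). $B^\pm$ are positive/negative parts of $B$, $b^+_{\min}$ smallest eigenvalue of $B^+$, $b^-_{\max}$ largest eigenvalue of $B^-$. $\|\phi\|_\infty=\max_j|\phi(j)|$. Fix parameters $p,P>0$, $L\in\mathbb N$, and a sequence $(\mu_k)_{k\in\mathbb N}$ of nonnegative reals, independent of $D$. S1: $H^{(D)}=(h_{ij})$ is of Wigner type (centered entries, $(h_{ij})_{i\le j}$ independent) and $\sigma_{ij}^2:=\mathbb E|h_{ij}|^2\le 1/D$ for all $i,j$. S2: the matrix $S=(\sigma_{ij}^2)$ satisfies $(S^L)_{ij}\ge p/D$ for all $i,j$. S3: the unique solution $m=(m_1,\dots,m_D):\mathbb H\to\mathbb H^D$ ($\mathbb H$ the complex upper half-plane) of the vector Dyson equation $-1/m_i(z)=z+\sum_j\sigma_{ij}^2m_j(z)$ satisfies $|m_i(z)|\le P$ for all $i$ and $z\in\mathbb H$. S4: $\mathbb E|h_{ij}|^k\le\mu_k\sigma_{ij}^k$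 for all $k\in\mathbb N$, $i,j$. *)

theory Defs
  imports "HOL-Probability.Probability"
begin

text \<open>Matrices of size D x D are functions nat => nat => complex, only entries with
indices < D are relevant; vectors are functions nat => complex. Indices run over 0..<D.\<close>

definition hermitian :: "nat \<Rightarrow> (nat \<Rightarrow> nat \<Rightarrow> complex) \<Rightarrow> bool" where
  "hermitian D A \<longleftrightarrow> (\<forall>i<D. \<forall>j<D. A j i = cnj (A i j))"

definition mat_vec :: "nat \<Rightarrow> (nat \<Rightarrow> nat \<Rightarrow> complex) \<Rightarrow> (nat \<Rightarrow> complex) \<Rightarrow> nat \<Rightarrow> complex" where
  "mat_vec D A v = (\<lambda>i. \<Sum>j<D. A i j * v j)"

definition cinner :: "nat \<Rightarrow> (nat \<Rightarrow> complex) \<Rightarrow> (nat \<Rightarrow> complex) \<Rightarrow> complex" where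
  "cinner D u v = (\<Sum>j<D. cnj (u j) * v j)"

definition orthonormal_family :: "nat \<Rightarrow> (nat \<Rightarrow> nat \<Rightarrow> complex) \<Rightarrow> bool" where
  "orthonormal_family D \<phi> \<longleftrightarrow>
     (\<forall>n<D. \<forall>m<D. cinner D (\<phi> n) (\<phi> m) = (if n = m then 1 else 0))"

definition is_eigenbasis :: "nat \<Rightarrow> (nat \<Rightarrow> nat \<Rightarrow> complex) \<Rightarrow> (nat \<Rightarrow> nat \<Rightarrow> complex) \<Rightarrow> bool" where
  "is_eigenbasis D A \<phi> \<longleftrightarrow> orthonormal_family D \<phi> \<and>
     (\<forall>n<D. \<exists>c. \<forall>i<D. mat_vec D A (\<phi> n) i = c * \<phi> n i)"

definition is_eigendecomp :: "nat \<Rightarrow> (nat \<Rightarrow> nat \<Rightarrow> complex) \<Rightarrow> (nat \<Rightarrow> nat \<Rightarrow> complex) \<Rightarrow> (nat \<Rightarrow> real) \<Rightarrow> bool" where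
  "is_eigendecomp D A \<psi> \<beta> \<longleftrightarrow> orthonormal_family D \<psi> \<and>
     (\<forall>n<D. \<forall>i<D. mat_vec D A (\<psi> n) i = complex_of_real (\<beta> n) * \<psi> n i)"

definition real_eigenvalues :: "nat \<Rightarrow> (nat \<Rightarrow> nat \<Rightarrow> complex) \<Rightarrow> real set" where
  "real_eigenvalues D A = {l. \<exists>v. (\<exists>i<D. v i \<noteq> 0) \<and>
       (\<forall>i<D. mat_vec D A v i = complex_of_real l * v i)}"

definition pos_part :: "nat \<Rightarrow> (nat \<Rightarrow> nat \<Rightarrow> complex) \<Rightarrow> (nat \<Rightarrow> real) \<Rightarrow> nat \<Rightarrow> nat \<Rightarrow> complex" where
  "pos_part D \<psi> \<beta> = (\<lambda>i j. \<Sum>k<D. complex_of_real (max (\<beta> k) 0) * \<psi> k i * cnj (\<psi> k j))"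

definition neg_part :: "nat \<Rightarrow> (nat \<Rightarrow> nat \<Rightarrow> complex) \<Rightarrow> (nat \<Rightarrow> real) \<Rightarrow> nat \<Rightarrow> nat \<Rightarrow> complex" where
  "neg_part D \<psi> \<beta> = (\<lambda>i j. \<Sum>k<D. complex_of_real (max (- \<beta> k) 0) * \<psi> k i * cnj (\<psi> k j))"

definition mtrace :: "nat \<Rightarrow> (nat \<Rightarrow> nat \<Rightarrow> complex) \<Rightarrow> complex" where
  "mtrace D A = (\<Sum>i<D. A i i)"

definition sup_norm :: "nat \<Rightarrow> (nat \<Rightarrow> complex) \<Rightarrow> real" where
  "sup_norm D v = Max ((\<lambda>j. cmod (v j)) ` {..<D})"

text \<open>Macro states: consecutive blocks I_nu = {a nu ..< a (nu+1)}, nu < K, of [D].\<close>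
definition macro_partition :: "nat \<Rightarrow> nat \<Rightarrow> (nat \<Rightarrow> nat) \<Rightarrow> bool" where
  "macro_partition D K a \<longleftrightarrow> a 0 = 0 \<and> a K = D \<and> (\<forall>\<nu><K. a \<nu> < a (Suc \<nu>))"

definition block :: "(nat \<Rightarrow> nat) \<Rightarrow> nat \<Rightarrow> nat set" where
  "block a \<nu> = {a \<nu> ..< a (Suc \<nu>)}"

definition bdim :: "(nat \<Rightarrow> nat) \<Rightarrow> nat \<Rightarrow> nat" where
  "bdim a \<nu> = a (Suc \<nu>) - a \<nu>"

definition proj :: "(nat \<Rightarrow> nat) \<Rightarrow> nat \<Rightarrow> nat \<Rightarrow> nat \<Rightarrow> complex" where
  "proj a \<nu> = (\<lambda>i j. if i = j \<and> i \<in> block a \<nu> then 1 else 0)"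

text \<open>Expectation <v|A|v> (real part; real for Hermitian A).\<close>
definition qform :: "nat \<Rightarrow> (nat \<Rightarrow> nat \<Rightarrow> complex) \<Rightarrow> (nat \<Rightarrow> complex) \<Rightarrow> real" where
  "qform D A v = Re (\<Sum>i<D. \<Sum>j<D. cnj (v i) * A i j * v j)"

definition Mmu :: "nat \<Rightarrow> (nat \<Rightarrow> nat) \<Rightarrow> (nat \<Rightarrow> nat \<Rightarrow> complex) \<Rightarrow> nat \<Rightarrow> (nat \<Rightarrow> nat \<Rightarrow> complex) \<Rightarrow> real" where
  "Mmu D a \<phi> \<mu> B = (1 / real (bdim a \<mu>)) * (\<Sum>n<D. qform D (proj a \<mu>) (\<phi> n) * qform D B (\<phi> n))"

fun matpow :: "nat \<Rightarrow> (nat \<Rightarrow> nat \<Rightarrow> real) \<Rightarrow> nat \<Rightarrow> nat \<Rightarrow> nat \<Rightarrow> real" where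
  "matpow D S 0 = (\<lambda>i j. if i = j then 1 else 0)"
| "matpow D S (Suc L) = (\<lambda>i j. \<Sum>k<D. matpow D S L i k * S k j)"

definition sigma2 :: "'w measure \<Rightarrow> ('w \<Rightarrow> nat \<Rightarrow> nat \<Rightarrow> complex) \<Rightarrow> nat \<Rightarrow> nat \<Rightarrow> real" where
  "sigma2 M H i j = enn2real (\<integral>\<^sup>+ \<omega>. ennreal ((cmod (H \<omega> i j))\<^sup>2) \<partial>M)"

text \<open>S3: every solution w in H^D of the vector Dyson equation at z in H is bounded by P
(the solution is unique for each z, so this is the bound on the unique solution m(z)).\<close>
definition dyson_bounded :: "nat \<Rightarrow> (nat \<Rightarrow> nat \<Rightarrow> real) \<Rightarrow> real \<Rightarrow> bool" where
  "dyson_bounded D s P \<longleftrightarrow> (\<forall>z w. Im z > 0 \<longrightarrow>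
      (\<forall>i<D. Im (w i) > 0 \<and> - 1 / w i = z + (\<Sum>j<D. complex_of_real (s i j) * w j)) \<longrightarrow>
      (\<forall>i<D. cmod (w i) \<le> P))"

end

theory Submission
  imports Defs "Jordan_Normal_Form.Determinant"
begin

lemma onb_complete:
  assumes on: "orthonormal_family D u" and ij: "i<D" "j<D"
  shows "(\<Sum>n<D. u n i * cnj (u n j)) = (if i=j then 1 else 0)"
proof -
  define A :: "complex mat" where "A = mat D D (\<lambda>(n,i). cnj (u n i))"
  define B :: "complex mat" where "B = mat D D (\<lambda>(i,n). u n i)"
  have AB: "A * B = 1\<^sub>m D"
  proof (rule eq_matI)
    fix n m assume nm: "n < dim_row (1\<^sub>m D)" "m < dim_col (1\<^sub>m D)"
    then have "(A*B) $$ (n,m) = (\<Sum>i<D. cnj (u n i) * u m i)"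
      by (auto simp: A_def B_def scalar_prod_def lessThan_atLeast0 intro!: sum.cong)
    also have "\<dots> = (if n = m then 1 else 0)" using on nm unfolding orthonormal_family_def cinner_def by auto
    finally show "(A*B) $$ (n,m) = 1\<^sub>m D $$ (n,m)" using nm by auto
  qed (auto simp: A_def B_def)
  have "B * A = 1\<^sub>m D"
    by (rule mat_mult_left_right_inverse[OF _ _ AB]) (auto simp: A_def B_def)
  then have "(B*A) $$ (i,j) = 1\<^sub>m D $$ (i,j)" by simp
  then show ?thesis using ij
    by (auto simp: A_def B_def scalar_prod_def lessThan_atLeast0 split: if_splits)
qed

lemma cmod_sq_eq: "complex_of_real ((cmod z)^2) = z * cnj z"
  by (rule complex_norm_square)

lemma cmod_sq_eq': "z * cnj z = (complex_of_real (cmod z))^2"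
  by (metis complex_norm_square of_real_power)

lemma cnj_sq_eq'': "cnj z * z = (complex_of_real (cmod z))^2"
  by (subst mult.commute) (rule cmod_sq_eq')

lemma parseval_c:
  assumes on: "orthonormal_family D u"
  shows "(\<Sum>n<D. cinner D (u n) v * cnj (cinner D (u n) v)) = (\<Sum>i<D. v i * cnj (v i))"
proof -
  have "(\<Sum>n<D. cinner D (u n) v * cnj (cinner D (u n) v))
     = (\<Sum>n<D. \<Sum>i<D. \<Sum>j<D. cnj (u n i) * v i * (u n j * cnj (v j)))"
    by (simp add: cinner_def sum_product cnj_sum)
  also have "\<dots> = (\<Sum>i<D. \<Sum>j<D. \<Sum>n<D. cnj (u n i) * v i * (u n j * cnj (v j)))"
    apply (rule trans[OF sum.swap])
    apply (rule sum.cong[OF refl])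
    apply (rule sum.swap)
    done
  also have "\<dots> = (\<Sum>i<D. \<Sum>j<D. v i * cnj (v j) * (\<Sum>n<D. u n j * cnj (u n i)))"
    by (simp add: sum_distrib_left mult_ac)
  also have "\<dots> = (\<Sum>i<D. \<Sum>j<D. v i * cnj (v j) * (if j = i then 1 else 0))"
    by (intro sum.cong refl) (simp add: onb_complete[OF on])
  also have "\<dots> = (\<Sum>i<D. v i * cnj (v i))"
    by (simp add: if_distrib cong: if_cong)
  finally show ?thesis .
qed

lemma parseval:
  assumes on: "orthonormal_family D u"
  shows "(\<Sum>n<D. (cmod (cinner D (u n) v))^2) = (\<Sum>i<D. (cmod (v i))^2)"
proof -
  have "complex_of_real (\<Sum>n<D. (cmod (cinner D (u n) v))^2) = complex_of_real (\<Sum>i<D. (cmod (v i))^2)"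
    by (simp only: of_real_sum cmod_sq_eq parseval_c[OF on])
  then show ?thesis by (simp only: of_real_eq_iff)
qed

lemma qform_spec:
  "qform D (\<lambda>i j. \<Sum>k<D. complex_of_real (m k) * \<psi> k i * cnj (\<psi> k j)) v
     = (\<Sum>k<D. m k * (cmod (cinner D (\<psi> k) v))^2)"
proof -
  have "(\<Sum>i<D. \<Sum>j<D. cnj (v i) * (\<Sum>k<D. complex_of_real (m k) * \<psi> k i * cnj (\<psi> k j)) * v j)
     = (\<Sum>i<D. \<Sum>j<D. \<Sum>k<D. complex_of_real (m k) * (cnj (\<psi> k j) * v j) * cnj (cnj (\<psi> k i) * v i))"
    by (simp add: sum_distrib_left sum_distrib_right mult_ac)
  also have "\<dots> = (\<Sum>k<D. complex_of_real (m k) * (\<Sum>j<D. cnj (\<psi> k j) * v j) * cnj (\<Sum>i<D. cnj (\<psi> k i) * v i))"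
  proof -
    have "(\<Sum>i<D. \<Sum>j<D. \<Sum>k<D. complex_of_real (m k) * (cnj (\<psi> k j) * v j) * cnj (cnj (\<psi> k i) * v i))
       = (\<Sum>k<D. \<Sum>i<D. \<Sum>j<D. complex_of_real (m k) * (cnj (\<psi> k j) * v j) * cnj (cnj (\<psi> k i) * v i))"
      apply (rule trans[OF sum.cong[OF refl sum.swap]])
      apply (rule sum.swap)
      done
    also have "\<dots> = (\<Sum>k<D. complex_of_real (m k) * (\<Sum>j<D. cnj (\<psi> k j) * v j) * cnj (\<Sum>i<D. cnj (\<psi> k i) * v i))"
      apply (simp add: sum_distrib_left sum_distrib_right cnj_sum sum_product mult_ac)
      apply (rule sum.cong[OF refl])
      apply (rule sum.swap)
      done
    finally show ?thesis .
  qed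
  also have "\<dots> = (\<Sum>k<D. complex_of_real (m k) * (cinner D (\<psi> k) v * cnj (cinner D (\<psi> k) v)))"
    by (simp add: cinner_def mult.assoc)
  also have "\<dots> = complex_of_real (\<Sum>k<D. m k * (cmod (cinner D (\<psi> k) v))^2)"
    by (simp only: complex_norm_square[symmetric] of_real_sum of_real_mult)
  finally show ?thesis unfolding qform_def by simp
qed

lemma norm1:
  assumes on: "orthonormal_family D u" and n: "n<D"
  shows "(\<Sum>i<D. (cmod (u n i))^2) = 1"
proof -
  have "cinner D (u n) (u n) = 1" using on n unfolding orthonormal_family_def by auto
  then have "complex_of_real (\<Sum>i<D. (cmod (u n i))^2) = 1"
    by (simp only: of_real_sum complex_norm_square cinner_def mult.commute)
  then show ?thesis by (metis of_real_eq_1_iff)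
qed

lemma rows1:
  assumes on: "orthonormal_family D u" and i: "i<D"
  shows "(\<Sum>n<D. (cmod (u n i))^2) = 1"
proof -
  have "complex_of_real (\<Sum>n<D. (cmod (u n i))^2) = 1"
    by (simp only: of_real_sum complex_norm_square onb_complete[OF on i i]) simp
  then show ?thesis by (metis of_real_eq_1_iff)
qed

lemma cinner_swap_cmod: "cmod (cinner D u v) = cmod (cinner D v u)"
proof -
  have "cinner D u v = cnj (cinner D v u)" by (simp add: cinner_def cnj_sum mult.commute)
  then show ?thesis by simp
qed

lemma trace_spec:
  assumes on: "orthonormal_family D \<psi>"
  shows "Re (mtrace D (\<lambda>i j. \<Sum>k<D. complex_of_real (m k) * \<psi> k i * cnj (\<psi> k j))) = (\<Sum>k<D. m k)"
proof -
  have "mtrace D (\<lambda>i j. \<Sum>k<D. complex_of_real (m k) * \<psi> k i * cnj (\<psi> k j))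
      = (\<Sum>k<D. \<Sum>i<D. complex_of_real (m k) * (\<psi> k i * cnj (\<psi> k i)))"
    unfolding mtrace_def by (subst sum.swap) (simp add: mult.assoc)
  also have "\<dots> = (\<Sum>k<D. complex_of_real (m k) * complex_of_real (\<Sum>i<D. (cmod (\<psi> k i))^2))"
    by (simp only: sum_distrib_left[symmetric] of_real_sum complex_norm_square)
  also have "\<dots> = (\<Sum>k<D. complex_of_real (m k))"
    by (intro sum.cong refl) (simp add: norm1[OF on])
  finally show ?thesis by simp
qed

lemma sum_qform_spec:
  assumes onp: "orthonormal_family D \<phi>" and on: "orthonormal_family D \<psi>"
  shows "(\<Sum>n<D. qform D (\<lambda>i j. \<Sum>k<D. complex_of_real (m k) * \<psi> k i * cnj (\<psi> k j)) (\<phi> n)) = (\<Sum>k<D. m k)"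
proof -
  have "(\<Sum>n<D. qform D (\<lambda>i j. \<Sum>k<D. complex_of_real (m k) * \<psi> k i * cnj (\<psi> k j)) (\<phi> n))
     = (\<Sum>n<D. \<Sum>k<D. m k * (cmod (cinner D (\<phi> n) (\<psi> k)))^2)"
    by (simp add: qform_spec cinner_swap_cmod)
  also have "\<dots> = (\<Sum>k<D. m k * (\<Sum>n<D. (cmod (cinner D (\<phi> n) (\<psi> k)))^2))"
    by (subst sum.swap) (simp add: sum_distrib_left)
  also have "\<dots> = (\<Sum>k<D. m k)"
    by (intro sum.cong refl) (simp add: parseval[OF onp] norm1[OF on])
  finally show ?thesis .
qed

lemma matvec_spec:
  "cinner D w (mat_vec D (\<lambda>i j. \<Sum>k<D. complex_of_real (m k) * \<psi> k i * cnj (\<psi> k j)) v)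
     = (\<Sum>k<D. complex_of_real (m k) * cinner D w (\<psi> k) * cinner D (\<psi> k) v)"
proof -
  have "cinner D w (mat_vec D (\<lambda>i j. \<Sum>k<D. complex_of_real (m k) * \<psi> k i * cnj (\<psi> k j)) v)
    = (\<Sum>i<D. \<Sum>j<D. \<Sum>k<D. complex_of_real (m k) * (cnj (w i) * \<psi> k i) * (cnj (\<psi> k j) * v j))"
    unfolding cinner_def mat_vec_def by (simp add: sum_distrib_left sum_distrib_right mult_ac)
  also have "\<dots> = (\<Sum>k<D. \<Sum>i<D. \<Sum>j<D. complex_of_real (m k) * (cnj (w i) * \<psi> k i) * (cnj (\<psi> k j) * v j))"
      apply (rule trans[OF sum.cong[OF refl sum.swap]])
      apply (rule sum.swap)
      done
  also have "\<dots> = (\<Sum>k<D. complex_of_real (m k) * cinner D w (\<psi> k) * cinner D (\<psi> k) v)"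
    unfolding cinner_def by (simp add: sum_distrib_left sum_distrib_right mult_ac)
  finally show ?thesis .
qed

lemma eig_spec:
  assumes on: "orthonormal_family D \<psi>"
  shows "real_eigenvalues D (\<lambda>i j. \<Sum>k<D. complex_of_real (m k) * \<psi> k i * cnj (\<psi> k j)) = m ` {..<D}"
    (is "real_eigenvalues D ?C = _")
proof
  show "real_eigenvalues D ?C \<subseteq> m ` {..<D}"
  proof
    fix l assume "l \<in> real_eigenvalues D ?C"
    then obtain v i0 where i0: "i0 < D" "v i0 \<noteq> 0" and ev: "\<forall>i<D. mat_vec D ?C v i = complex_of_real l * v i"
      unfolding real_eigenvalues_def by blast
    show "l \<in> m ` {..<D}"
    proof (rule ccontr)
      assume nl: "l \<notin> m ` {..<D}"
      have c0: "cinner D (\<psi> q) v = 0" if q: "q < D" for q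
      proof -
        have "cinner D (\<psi> q) (mat_vec D ?C v) = complex_of_real l * cinner D (\<psi> q) v"
          unfolding cinner_def using ev by (simp add: sum_distrib_left mult_ac)
        moreover have "cinner D (\<psi> q) (mat_vec D ?C v) = complex_of_real (m q) * cinner D (\<psi> q) v"
        proof -
          have "\<And>k. k<D \<Longrightarrow> cinner D (\<psi> q) (\<psi> k) = (if k = q then 1 else 0)"
            using on q unfolding orthonormal_family_def by auto
          then have "(\<Sum>k<D. complex_of_real (m k) * cinner D (\<psi> q) (\<psi> k) * cinner D (\<psi> k) v)
             = (\<Sum>k<D. if k = q then complex_of_real (m q) * cinner D (\<psi> q) v else 0)"
            by (intro sum.cong) auto
          then show ?thesis unfolding matvec_spec using q by simp
        qed
        ultimately have "(complex_of_real l - complex_of_real (m q)) * cinner D (\<psi> q) v = 0"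
          by (simp add: algebra_simps)
        moreover have "l \<noteq> m q" using nl q by auto
        ultimately show ?thesis by simp
      qed
      have "(\<Sum>i<D. (cmod (v i))^2) = 0"
        using parseval[OF on, of v, symmetric] by (simp add: c0)
      then have "(cmod (v i0))^2 = 0"
        using i0 by (subst (asm) sum_nonneg_eq_0_iff) auto
      then show False using i0 by simp
    qed
  qed
next
  show "m ` {..<D} \<subseteq> real_eigenvalues D ?C"
  proof
    fix l assume "l \<in> m ` {..<D}"
    then obtain q where q: "q < D" "l = m q" by auto
    have "(\<Sum>i<D. (cmod (\<psi> q i))^2) = 1" by (rule norm1[OF on q(1)])
    have "\<exists>i0<D. \<psi> q i0 \<noteq> 0"
    proof (rule ccontr)
      assume "\<not> (\<exists>i0<D. \<psi> q i0 \<noteq> 0)"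
      then have "(\<Sum>i<D. (cmod (\<psi> q i))^2) = 0" by simp
      then show False using \<open>(\<Sum>i<D. (cmod (\<psi> q i))^2) = 1\<close> by simp
    qed
    then obtain i0 where i0: "i0 < D" "\<psi> q i0 \<noteq> 0" by blast
    have "mat_vec D ?C (\<psi> q) i = complex_of_real (m q) * \<psi> q i" if i: "i < D" for i
    proof -
      have "mat_vec D ?C (\<psi> q) i = (\<Sum>k<D. complex_of_real (m k) * \<psi> k i * cinner D (\<psi> k) (\<psi> q))"
      proof -
        have "mat_vec D ?C (\<psi> q) i = (\<Sum>j<D. \<Sum>k<D. complex_of_real (m k) * \<psi> k i * (cnj (\<psi> k j) * \<psi> q j))"
          unfolding mat_vec_def by (simp add: sum_distrib_right sum_distrib_left mult_ac)
        also have "\<dots> = (\<Sum>k<D. \<Sum>j<D. complex_of_real (m k) * \<psi> k i * (cnj (\<psi> k j) * \<psi> q j))"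
          by (rule sum.swap)
        also have "\<dots> = (\<Sum>k<D. complex_of_real (m k) * \<psi> k i * cinner D (\<psi> k) (\<psi> q))"
          unfolding cinner_def by (simp add: sum_distrib_left)
        finally show ?thesis .
      qed
      also have "\<dots> = (\<Sum>k<D. if k = q then complex_of_real (m q) * \<psi> q i else 0)"
        using on q unfolding orthonormal_family_def by (intro sum.cong) auto
      also have "\<dots> = complex_of_real (m q) * \<psi> q i" using q by simp
      finally show ?thesis .
    qed
    then show "l \<in> real_eigenvalues D ?C"
      unfolding real_eigenvalues_def using i0 q by blast
  qed
qed

lemma B_decomp:
  assumes eig: "is_eigendecomp D B \<psi> \<beta>" and i: "i<D" and j: "j<D"
  shows "B i j = (\<Sum>k<D. complex_of_real (\<beta> k) * \<psi> k i * cnj (\<psi> k j))"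
proof -
  have on: "orthonormal_family D \<psi>" and ev: "\<forall>n<D. \<forall>i<D. mat_vec D B (\<psi> n) i = complex_of_real (\<beta> n) * \<psi> n i"
    using eig unfolding is_eigendecomp_def by auto
  have "(\<Sum>l<D. B i l * (if l = j then 1 else 0)) = (\<Sum>l<D. if l = j then B i l else 0)"
    by (intro sum.cong) auto
  then have "B i j = (\<Sum>l<D. B i l * (if l = j then 1 else 0))" using j by simp
  also have "\<dots> = (\<Sum>l<D. \<Sum>k<D. B i l * (\<psi> k l * cnj (\<psi> k j)))"
    using j by (intro sum.cong refl) (simp add: onb_complete[OF on] sum_distrib_left[symmetric])
  also have "\<dots> = (\<Sum>k<D. \<Sum>l<D. B i l * (\<psi> k l * cnj (\<psi> k j)))"
    by (rule sum.swap)
  also have "\<dots> = (\<Sum>k<D. mat_vec D B (\<psi> k) i * cnj (\<psi> k j))"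
    unfolding mat_vec_def sum_distrib_right by (simp add: mult_ac)
  also have "\<dots> = (\<Sum>k<D. complex_of_real (\<beta> k) * \<psi> k i * cnj (\<psi> k j))"
    using ev i by (intro sum.cong refl) simp
  finally show ?thesis .
qed

lemma qform_cong:
  assumes "\<And>i j. i<D \<Longrightarrow> j<D \<Longrightarrow> A i j = C i j"
  shows "qform D A v = qform D C v"
  unfolding qform_def using assms by (intro arg_cong[where f=Re] sum.cong refl) auto

lemma qform_B:
  assumes eig: "is_eigendecomp D B \<psi> \<beta>"
  shows "qform D B v = qform D (pos_part D \<psi> \<beta>) v - qform D (neg_part D \<psi> \<beta>) v"
proof -
  have "qform D B v = qform D (\<lambda>i j. \<Sum>k<D. complex_of_real (\<beta> k) * \<psi> k i * cnj (\<psi> k j)) v"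
    by (rule qform_cong) (rule B_decomp[OF eig])
  also have "\<dots> = (\<Sum>k<D. \<beta> k * (cmod (cinner D (\<psi> k) v))^2)" by (rule qform_spec)
  also have "\<dots> = (\<Sum>k<D. max (\<beta> k) 0 * (cmod (cinner D (\<psi> k) v))^2)
       - (\<Sum>k<D. max (- \<beta> k) 0 * (cmod (cinner D (\<psi> k) v))^2)"
  proof -
    have "(\<Sum>k<D. \<beta> k * (cmod (cinner D (\<psi> k) v))^2)
       = (\<Sum>k<D. (max (\<beta> k) 0 - max (- \<beta> k) 0) * (cmod (cinner D (\<psi> k) v))^2)"
      by (intro sum.cong refl) (auto simp: max_def)
    then show ?thesis by (simp add: left_diff_distrib sum_subtractf)
  qed
  finally show ?thesis unfolding pos_part_def neg_part_def qform_spec .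
qed

lemma part_mono:
  assumes "macro_partition D K a" "\<mu> \<le> \<nu>" "\<nu> \<le> K"
  shows "a \<mu> \<le> a \<nu>"
  using assms(2,3)
proof (induction \<nu>)
  case 0 then show ?case by simp
next
  case (Suc n)
  show ?case
  proof (cases "\<mu> = Suc n")
    case False
    then have "a \<mu> \<le> a n" using Suc by auto
    moreover have "a n < a (Suc n)" using assms(1) Suc unfolding macro_partition_def by auto
    ultimately show ?thesis by simp
  qed simp
qed

lemma block_facts:
  assumes part: "macro_partition D K a" and mu: "\<mu> < K"
  shows "block a \<mu> \<subseteq> {..<D}" "card (block a \<mu>) = bdim a \<mu>" "bdim a \<mu> > 0" "bdim a \<mu> \<le> D"
proof -
  have "a (Suc \<mu>) \<le> a K" using part_mono[OF part, of "Suc \<mu>" K] mu by simp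
  then have le: "a (Suc \<mu>) \<le> D" using part unfolding macro_partition_def by simp
  have lt: "a \<mu> < a (Suc \<mu>)" using part mu unfolding macro_partition_def by simp
  show "block a \<mu> \<subseteq> {..<D}" using le unfolding block_def by auto
  show "card (block a \<mu>) = bdim a \<mu>" unfolding block_def bdim_def by simp
  show "bdim a \<mu> > 0" using lt unfolding bdim_def by simp
  show "bdim a \<mu> \<le> D" using le unfolding bdim_def by simp
qed

lemma qform_proj:
  assumes "block a \<nu> \<subseteq> {..<D}"
  shows "qform D (proj a \<nu>) v = (\<Sum>i\<in>block a \<nu>. (cmod (v i))^2)"
proof -
  have "(\<Sum>i<D. \<Sum>j<D. cnj (v i) * proj a \<nu> i j * v j)
      = (\<Sum>i<D. if i \<in> block a \<nu> then complex_of_real ((cmod (v i))^2) else 0)"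
  proof (intro sum.cong refl)
    fix i assume i: "i \<in> {..<D}"
    have "(\<Sum>j<D. cnj (v i) * proj a \<nu> i j * v j)
       = (\<Sum>j<D. if j = i then (if i \<in> block a \<nu> then cnj (v i) * v i else 0) else 0)"
      unfolding proj_def by (intro sum.cong) auto
    also have "\<dots> = (if i \<in> block a \<nu> then complex_of_real ((cmod (v i))^2) else 0)"
      using i by (simp add: cnj_sq_eq'')
    finally show "(\<Sum>j<D. cnj (v i) * proj a \<nu> i j * v j) = (if i \<in> block a \<nu> then complex_of_real ((cmod (v i))^2) else 0)" .
  qed
  also have "\<dots> = (\<Sum>i\<in>block a \<nu>. complex_of_real ((cmod (v i))^2))"
    using assms by (simp add: sum.If_cases Int_absorb1)
  also have "\<dots> = complex_of_real (\<Sum>i\<in>block a \<nu>. (cmod (v i))^2)"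
    by (rule of_real_sum[symmetric])
  finally show ?thesis unfolding qform_def by (simp only: Re_complex_of_real)
qed

lemma ineqA:
  fixes p x y :: "nat \<Rightarrow> real" and d c mn mx Tp Tm :: real
  assumes d: "d > 0" and p: "\<forall>n<D. 0 \<le> p n \<and> p n \<le> 1 \<and> c \<le> p n" and sp: "(\<Sum>n<D. p n) = d"
    and x: "\<forall>n<D. 0 \<le> x n \<and> mn \<le> x n" and sx: "(\<Sum>n<D. x n) = Tp"
    and y: "\<forall>n<D. 0 \<le> y n \<and> y n \<le> mx" and sy: "(\<Sum>n<D. y n) = Tm"
  shows "max mn (Tp / d * c) - min mx (Tm / d) \<le> (1/d) * (\<Sum>n<D. p n * (x n - y n))"
proof -
  have S1a: "mn * d \<le> (\<Sum>n<D. p n * x n)"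
  proof -
    have "mn * d = (\<Sum>n<D. p n * mn)" using sp by (metis mult.commute sum_distrib_right)
    also have "\<dots> \<le> (\<Sum>n<D. p n * x n)" using p x by (intro sum_mono mult_left_mono) auto
    finally show ?thesis .
  qed
  have S1b: "c * Tp \<le> (\<Sum>n<D. p n * x n)"
  proof -
    have "c * Tp = (\<Sum>n<D. c * x n)" using sx by (metis sum_distrib_left)
    also have "\<dots> \<le> (\<Sum>n<D. p n * x n)" using p x by (intro sum_mono mult_right_mono) auto
    finally show ?thesis .
  qed
  have S2a: "(\<Sum>n<D. p n * y n) \<le> mx * d"
  proof -
    have "(\<Sum>n<D. p n * y n) \<le> (\<Sum>n<D. p n * mx)" using p y by (intro sum_mono mult_left_mono) auto
    also have "\<dots> = mx * d" using sp by (metis mult.commute sum_distrib_right)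
    finally show ?thesis .
  qed
  have S2b: "(\<Sum>n<D. p n * y n) \<le> Tm"
  proof -
    have "(\<Sum>n<D. p n * y n) \<le> (\<Sum>n<D. 1 * y n)" using p y by (intro sum_mono mult_right_mono) auto
    then show ?thesis using sy by simp
  qed
  have eq: "(1/d) * (\<Sum>n<D. p n * (x n - y n)) = (\<Sum>n<D. p n * x n) / d - (\<Sum>n<D. p n * y n) / d"
    by (simp add: right_diff_distrib sum_subtractf diff_divide_distrib)
  have "max mn (Tp / d * c) \<le> (\<Sum>n<D. p n * x n) / d"
    using S1a S1b d by (auto simp: max_def field_simps)
  moreover have "(\<Sum>n<D. p n * y n) / d \<le> min mx (Tm / d)"
    using S2a S2b d by (auto simp: min_def field_simps)
  ultimately show ?thesis unfolding eq by linarith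
qed

lemma ineqB:
  fixes p q :: "nat \<Rightarrow> real" and d e c c' :: real
  assumes d: "d > 0" and p: "\<forall>n<D. 0 \<le> p n \<and> c \<le> p n" and sp: "(\<Sum>n<D. p n) = d"
    and q: "\<forall>n<D. 0 \<le> q n \<and> c' \<le> q n" and sq: "(\<Sum>n<D. q n) = e"
  shows "e / d * c \<le> (1/d) * (\<Sum>n<D. p n * q n)" "c' \<le> (1/d) * (\<Sum>n<D. p n * q n)"
proof -
  have "c * e = (\<Sum>n<D. c * q n)" using sq by (metis sum_distrib_left)
  also have "\<dots> \<le> (\<Sum>n<D. p n * q n)" using p q by (intro sum_mono mult_right_mono) auto
  finally have "c * e \<le> (\<Sum>n<D. p n * q n)" .
  then show "e / d * c \<le> (1/d) * (\<Sum>n<D. p n * q n)" using d by (simp add: field_simps)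
  have "c' * d = (\<Sum>n<D. p n * c')" using sp by (metis mult.commute sum_distrib_right)
  also have "\<dots> \<le> (\<Sum>n<D. p n * q n)" using p q by (intro sum_mono mult_left_mono) auto
  finally show "c' \<le> (1/d) * (\<Sum>n<D. p n * q n)" using d by (simp add: field_simps)
qed

lemma pfacts:
  assumes on: "orthonormal_family D u" and blk: "I \<subseteq> {..<D}"
    and r: "\<forall>n<D. \<forall>j<D. cmod (u n j) \<le> r" and r0: "0 \<le> r"
  shows "\<forall>n<D. 0 \<le> (\<Sum>i\<in>I. (cmod (u n i))^2) \<and> (\<Sum>i\<in>I. (cmod (u n i))^2) \<le> 1
            \<and> 1 - real (D - card I) * r^2 \<le> (\<Sum>i\<in>I. (cmod (u n i))^2)"
    "(\<Sum>n<D. \<Sum>i\<in>I. (cmod (u n i))^2) = real (card I)"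
proof -
  have fin: "finite I" using blk finite_subset by blast
  show "\<forall>n<D. 0 \<le> (\<Sum>i\<in>I. (cmod (u n i))^2) \<and> (\<Sum>i\<in>I. (cmod (u n i))^2) \<le> 1
            \<and> 1 - real (D - card I) * r^2 \<le> (\<Sum>i\<in>I. (cmod (u n i))^2)"
  proof (intro allI impI conjI)
    fix n assume n: "n < D"
    show "0 \<le> (\<Sum>i\<in>I. (cmod (u n i))^2)" by (simp add: sum_nonneg)
    have split: "(\<Sum>i<D. (cmod (u n i))^2) = (\<Sum>i\<in>I. (cmod (u n i))^2) + (\<Sum>i\<in>{..<D} - I. (cmod (u n i))^2)"
      using blk by (metis (no_types, lifting) add.commute finite_lessThan sum.subset_diff)
    have rest0: "0 \<le> (\<Sum>i\<in>{..<D} - I. (cmod (u n i))^2)" by (simp add: sum_nonneg)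
    show "(\<Sum>i\<in>I. (cmod (u n i))^2) \<le> 1" using split rest0 norm1[OF on n] by linarith
    have "(\<Sum>i\<in>{..<D} - I. (cmod (u n i))^2) \<le> (\<Sum>i\<in>{..<D} - I. r^2)"
      using r n by (intro sum_mono power_mono) auto
    also have "\<dots> = real (D - card I) * r^2"
      using blk fin by (simp add: card_Diff_subset)
    finally show "1 - real (D - card I) * r^2 \<le> (\<Sum>i\<in>I. (cmod (u n i))^2)"
      using split norm1[OF on n] by linarith
  qed
  have "(\<Sum>n<D. \<Sum>i\<in>I. (cmod (u n i))^2) = (\<Sum>i\<in>I. \<Sum>n<D. (cmod (u n i))^2)"
    by (rule sum.swap)
  also have "\<dots> = (\<Sum>i\<in>I. 1)" using blk by (intro sum.cong refl) (auto intro: rows1[OF on])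
  finally show "(\<Sum>n<D. \<Sum>i\<in>I. (cmod (u n i))^2) = real (card I)" by simp
qed

lemma spec_bounds:
  assumes on: "orthonormal_family D \<psi>" and onp: "orthonormal_family D \<phi>" and n: "n < D"
  shows "Min (m ` {..<D}) \<le> qform D (\<lambda>i j. \<Sum>k<D. complex_of_real (m k) * \<psi> k i * cnj (\<psi> k j)) (\<phi> n)"
    "qform D (\<lambda>i j. \<Sum>k<D. complex_of_real (m k) * \<psi> k i * cnj (\<psi> k j)) (\<phi> n) \<le> Max (m ` {..<D})"
    "(\<forall>k. 0 \<le> m k) \<Longrightarrow> 0 \<le> qform D (\<lambda>i j. \<Sum>k<D. complex_of_real (m k) * \<psi> k i * cnj (\<psi> k j)) (\<phi> n)"
proof -
  have P: "(\<Sum>k<D. (cmod (cinner D (\<psi> k) (\<phi> n)))^2) = 1"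
    using parseval[OF on] norm1[OF onp n] by simp
  have "Min (m ` {..<D}) = (\<Sum>k<D. Min (m ` {..<D}) * (cmod (cinner D (\<psi> k) (\<phi> n)))^2)"
    by (simp add: sum_distrib_left[symmetric] P)
  also have "\<dots> \<le> (\<Sum>k<D. m k * (cmod (cinner D (\<psi> k) (\<phi> n)))^2)"
    by (intro sum_mono mult_right_mono) auto
  finally show "Min (m ` {..<D}) \<le> qform D (\<lambda>i j. \<Sum>k<D. complex_of_real (m k) * \<psi> k i * cnj (\<psi> k j)) (\<phi> n)"
    by (simp add: qform_spec)
  have "(\<Sum>k<D. m k * (cmod (cinner D (\<psi> k) (\<phi> n)))^2) \<le> (\<Sum>k<D. Max (m ` {..<D}) * (cmod (cinner D (\<psi> k) (\<phi> n)))^2)"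
    by (intro sum_mono mult_right_mono) auto
  also have "\<dots> = Max (m ` {..<D})"
    by (simp add: sum_distrib_left[symmetric] P)
  finally show "qform D (\<lambda>i j. \<Sum>k<D. complex_of_real (m k) * \<psi> k i * cnj (\<psi> k j)) (\<phi> n) \<le> Max (m ` {..<D})"
    by (simp add: qform_spec)
  show "(\<forall>k. 0 \<le> m k) \<Longrightarrow> 0 \<le> qform D (\<lambda>i j. \<Sum>k<D. complex_of_real (m k) * \<psi> k i * cnj (\<psi> k j)) (\<phi> n)"
    by (simp add: qform_spec sum_nonneg)
qed

theorem mainTheorem12:
  fixes Ms :: "nat \<Rightarrow> 'w measure"
    and H :: "nat \<Rightarrow> 'w \<Rightarrow> nat \<Rightarrow> nat \<Rightarrow> complex"
    and \<phi> :: "nat \<Rightarrow> 'w \<Rightarrow> nat \<Rightarrow> nat \<Rightarrow> complex"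
    and p P :: real and L :: nat and mus :: "nat \<Rightarrow> real"
    and D0 :: "real \<Rightarrow> real \<Rightarrow> nat"
    and \<tau> \<alpha> :: real and D K :: nat and a :: "nat \<Rightarrow> nat"
    and B \<psi> :: "nat \<Rightarrow> nat \<Rightarrow> complex" and \<beta> :: "nat \<Rightarrow> real"
  assumes params: "p > 0" "P > 0" "L \<ge> 1" "\<forall>k. mus k \<ge> 0"
    and prob: "\<forall>D'. prob_space (Ms D')"
    and meas_H: "\<forall>D' i j. (\<lambda>\<omega>. H D' \<omega> i j) \<in> borel_measurable (Ms D')"
    and herm_H: "\<forall>D'. \<forall>\<omega>\<in>space (Ms D'). hermitian D' (H D' \<omega>)"
    and S1_centered: "\<forall>D'. \<forall>i<D'. \<forall>j<D'. (\<integral>\<omega>. H D' \<omega> i j \<partial>Ms D') = 0"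
    and S1_indep: "\<forall>D'. prob_space.indep_vars (Ms D') (\<lambda>_. borel)
                       (\<lambda>(i,j) \<omega>. H D' \<omega> i j) {(i,j). i \<le> j \<and> j < D'}"
    and S1_var: "\<forall>D'. \<forall>i<D'. \<forall>j<D'.
                   (\<integral>\<^sup>+ \<omega>. ennreal ((cmod (H D' \<omega> i j))\<^sup>2) \<partial>Ms D') \<le> ennreal (1 / real D')"
    and S2: "\<forall>D'. \<forall>i<D'. \<forall>j<D'. matpow D' (sigma2 (Ms D') (H D')) L i j \<ge> p / real D'"
    and S3: "\<forall>D'. dyson_bounded D' (sigma2 (Ms D') (H D')) P"
    and S4: "\<forall>D' k. \<forall>i<D'. \<forall>j<D'.
               (\<integral>\<^sup>+ \<omega>. ennreal ((cmod (H D' \<omega> i j)) ^ k) \<partial>Ms D')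
                 \<le> ennreal (mus k * (sqrt (sigma2 (Ms D') (H D') i j)) ^ k)"
    and meas_phi: "\<forall>D' n j. (\<lambda>\<omega>. \<phi> D' \<omega> n j) \<in> borel_measurable (Ms D')"
    and eig_phi: "\<forall>D'. \<forall>\<omega>\<in>space (Ms D'). is_eigenbasis D' (H D' \<omega>) (\<phi> D' \<omega>)"
    and deloc: "\<forall>t>0. \<forall>s>0. \<forall>D'\<ge>D0 t s. \<forall>n<D'.
        measure (Ms D') {\<omega>\<in>space (Ms D'). sup_norm D' (\<phi> D' \<omega> n) > real D' powr (t - 1/2)}
          \<le> real D' powr (- s)"
    and tau: "\<tau> > 0" and alpha: "\<alpha> > 1" and DD0: "D \<ge> D0 \<tau> \<alpha>"
    and part: "macro_partition D K a"
    and herm_B: "hermitian D B"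
    and eig_B: "is_eigendecomp D B \<psi> \<beta>"
  shows "\<exists>E\<in>sets (Ms D). measure (Ms D) E \<ge> 1 - real D powr (1 - \<alpha>) \<and>
     (\<forall>\<omega>\<in>E.
       (\<forall>\<mu><K.
          \<bar>Mmu D a (\<phi> D \<omega>) \<mu> B\<bar> \<ge>
            max (Min (real_eigenvalues D (pos_part D \<psi> \<beta>)))
                (Re (mtrace D (pos_part D \<psi> \<beta>)) / real (bdim a \<mu>)
                   * (1 - real (D - bdim a \<mu>) / real D powr (1 - 2 * \<tau>)))
            - min (Max (real_eigenvalues D (neg_part D \<psi> \<beta>)))
                  (Re (mtrace D (neg_part D \<psi> \<beta>)) / real (bdim a \<mu>))) \<and>
       (\<forall>\<mu><K. \<forall>\<nu><K.
          Mmu D a (\<phi> D \<omega>) \<mu> (proj a \<nu>) \<ge>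
            real (bdim a \<nu>) / real (bdim a \<mu>) * (1 - real (D - bdim a \<mu>) / real D powr (1 - 2 * \<tau>)) \<and>
          Mmu D a (\<phi> D \<omega>) \<mu> (proj a \<nu>) \<ge>
            1 - real (D - bdim a \<nu>) / real D powr (1 - 2 * \<tau>)))"
proof -
  interpret M: prob_space "Ms D" using prob by blast
  have onB: "orthonormal_family D \<psi>" using eig_B by (simp add: is_eigendecomp_def)
  show ?thesis
  proof (cases "D = 0")
    case True
    have K0: "K = 0"
    proof (rule ccontr)
      assume "K \<noteq> 0"
      then have "a 0 < a (Suc 0)" using part unfolding macro_partition_def by auto
      moreover have "a (Suc 0) \<le> a K" using part_mono[OF part, of "Suc 0" K] \<open>K \<noteq> 0\<close> by simp
      ultimately show False using part True unfolding macro_partition_def by simp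
    qed
    show ?thesis
      by (intro bexI[of _ "space (Ms D)"]) (use M.prob_space in \<open>auto simp: True K0\<close>)
  next
    case False
    then have Dpos: "real D > 0" by simp
    define r where "r = real D powr (\<tau> - 1/2)"
    define E where "E = {\<omega>\<in>space (Ms D). \<forall>n<D. \<forall>j<D. cmod (\<phi> D \<omega> n j) \<le> r}"
    have measphi[measurable]: "\<And>n j. (\<lambda>\<omega>. \<phi> D \<omega> n j) \<in> borel_measurable (Ms D)" using meas_phi by blast
    have Esets: "E \<in> sets (Ms D)" unfolding E_def by measurable
    define bad where "bad n = {\<omega>\<in>space (Ms D). sup_norm D (\<phi> D \<omega> n) > r}" for n
    have bad_eq: "bad n = {\<omega>\<in>space (Ms D). \<exists>j<D. r < cmod (\<phi> D \<omega> n j)}" for n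
    proof -
      have "\<And>\<omega>. r < Max ((\<lambda>j. cmod (\<phi> D \<omega> n j)) ` {..<D}) \<longleftrightarrow> (\<exists>x\<in>(\<lambda>j. cmod (\<phi> D \<omega> n j)) ` {..<D}. r < x)"
        by (rule Max_gr_iff) (use False in auto)
      then show ?thesis unfolding bad_def sup_norm_def by auto
    qed
    have bad_sets: "bad n \<in> sets (Ms D)" for n unfolding bad_eq by measurable
    have sub: "space (Ms D) - E \<subseteq> (\<Union>n<D. bad n)" unfolding E_def bad_eq by (auto simp: not_le) (meson lessThan_iff not_le)
    have "measure (Ms D) (space (Ms D) - E) \<le> measure (Ms D) (\<Union>n<D. bad n)"
      by (rule M.finite_measure_mono[OF sub]) (use bad_sets in auto)
    also have "\<dots> \<le> (\<Sum>n<D. measure (Ms D) (bad n))"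
      by (rule M.finite_measure_subadditive_finite) (use bad_sets in auto)
    also have "\<dots> \<le> (\<Sum>n<D. real D powr (- \<alpha>))"
      using deloc tau alpha DD0 by (intro sum_mono) (auto simp: bad_def r_def)
    also have "\<dots> = real D powr (1 - \<alpha>)"
      using Dpos by (simp add: powr_diff powr_minus divide_inverse)
    finally have mc: "measure (Ms D) (space (Ms D) - E) \<le> real D powr (1 - \<alpha>)" .
    have mE: "measure (Ms D) E \<ge> 1 - real D powr (1 - \<alpha>)"
      using mc M.prob_compl[OF Esets] by simp
    have r0: "0 \<le> r" unfolding r_def by simp
    have r2: "real d' * r^2 = real d' / real D powr (1 - 2 * \<tau>)" for d'
    proof -
      have "r^2 = real D powr (2 * \<tau> - 1)" unfolding r_def power2_eq_square
        using Dpos by (simp add: powr_add[symmetric])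
      also have "\<dots> = 1 / real D powr (1 - 2 * \<tau>)"
        using Dpos by (simp add: powr_minus_divide[symmetric])
      finally show ?thesis by simp
    qed
    have pointwise: "(\<forall>\<mu><K.
          \<bar>Mmu D a (\<phi> D \<omega>) \<mu> B\<bar> \<ge>
            max (Min (real_eigenvalues D (pos_part D \<psi> \<beta>)))
                (Re (mtrace D (pos_part D \<psi> \<beta>)) / real (bdim a \<mu>)
                   * (1 - real (D - bdim a \<mu>) / real D powr (1 - 2 * \<tau>)))
            - min (Max (real_eigenvalues D (neg_part D \<psi> \<beta>)))
                  (Re (mtrace D (neg_part D \<psi> \<beta>)) / real (bdim a \<mu>))) \<and>
       (\<forall>\<mu><K. \<forall>\<nu><K.
          Mmu D a (\<phi> D \<omega>) \<mu> (proj a \<nu>) \<ge>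
            real (bdim a \<nu>) / real (bdim a \<mu>) * (1 - real (D - bdim a \<mu>) / real D powr (1 - 2 * \<tau>)) \<and>
          Mmu D a (\<phi> D \<omega>) \<mu> (proj a \<nu>) \<ge>
            1 - real (D - bdim a \<nu>) / real D powr (1 - 2 * \<tau>))" if \<omega>E: "\<omega> \<in> E" for \<omega>
    proof -
      have \<omega>s: "\<omega> \<in> space (Ms D)" and rb: "\<forall>n<D. \<forall>j<D. cmod (\<phi> D \<omega> n j) \<le> r"
        using \<omega>E unfolding E_def by auto
      have onP: "orthonormal_family D (\<phi> D \<omega>)"
        using eig_phi \<omega>s unfolding is_eigenbasis_def by blast
      have PF: "(\<forall>n<D. 0 \<le> qform D (proj a \<mu>) (\<phi> D \<omega> n) \<and> qform D (proj a \<mu>) (\<phi> D \<omega> n) \<le> 1 \<and>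
                 1 - real (D - bdim a \<mu>) / real D powr (1 - 2 * \<tau>) \<le> qform D (proj a \<mu>) (\<phi> D \<omega> n))
             \<and> (\<Sum>n<D. qform D (proj a \<mu>) (\<phi> D \<omega> n)) = real (bdim a \<mu>)" if mu: "\<mu> < K" for \<mu>
      proof -
        note bf = block_facts[OF part mu]
        note pf = pfacts[OF onP bf(1) rb r0]
        show ?thesis using pf unfolding qform_proj[OF bf(1)] bf(2) r2 by simp
      qed
      have part1: "\<bar>Mmu D a (\<phi> D \<omega>) \<mu> B\<bar> \<ge>
            max (Min (real_eigenvalues D (pos_part D \<psi> \<beta>)))
                (Re (mtrace D (pos_part D \<psi> \<beta>)) / real (bdim a \<mu>)
                   * (1 - real (D - bdim a \<mu>) / real D powr (1 - 2 * \<tau>)))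
            - min (Max (real_eigenvalues D (neg_part D \<psi> \<beta>)))
                  (Re (mtrace D (neg_part D \<psi> \<beta>)) / real (bdim a \<mu>))" if mu: "\<mu> < K" for \<mu>
      proof -
        have eqM: "Mmu D a (\<phi> D \<omega>) \<mu> B = (1 / real (bdim a \<mu>)) * (\<Sum>n<D. qform D (proj a \<mu>) (\<phi> D \<omega> n) *
              (qform D (pos_part D \<psi> \<beta>) (\<phi> D \<omega> n) - qform D (neg_part D \<psi> \<beta>) (\<phi> D \<omega> n)))"
          unfolding Mmu_def qform_B[OF eig_B] ..
        have "max (Min (real_eigenvalues D (pos_part D \<psi> \<beta>)))
                (Re (mtrace D (pos_part D \<psi> \<beta>)) / real (bdim a \<mu>)
                   * (1 - real (D - bdim a \<mu>) / real D powr (1 - 2 * \<tau>)))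
            - min (Max (real_eigenvalues D (neg_part D \<psi> \<beta>)))
                  (Re (mtrace D (neg_part D \<psi> \<beta>)) / real (bdim a \<mu>)) \<le> Mmu D a (\<phi> D \<omega>) \<mu> B"
          unfolding eqM
        proof (rule ineqA)
          show "0 < real (bdim a \<mu>)" using block_facts[OF part mu] by simp
          show "\<forall>n<D. 0 \<le> qform D (proj a \<mu>) (\<phi> D \<omega> n) \<and> qform D (proj a \<mu>) (\<phi> D \<omega> n) \<le> 1 \<and>
                 1 - real (D - bdim a \<mu>) / real D powr (1 - 2 * \<tau>) \<le> qform D (proj a \<mu>) (\<phi> D \<omega> n)"
            using PF[OF mu] by blast
          show "(\<Sum>n<D. qform D (proj a \<mu>) (\<phi> D \<omega> n)) = real (bdim a \<mu>)" using PF[OF mu] by blast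
          show "\<forall>n<D. 0 \<le> qform D (pos_part D \<psi> \<beta>) (\<phi> D \<omega> n) \<and>
              Min (real_eigenvalues D (pos_part D \<psi> \<beta>)) \<le> qform D (pos_part D \<psi> \<beta>) (\<phi> D \<omega> n)"
            unfolding pos_part_def eig_spec[OF onB] using spec_bounds[OF onB onP] by auto
          show "(\<Sum>n<D. qform D (pos_part D \<psi> \<beta>) (\<phi> D \<omega> n)) = Re (mtrace D (pos_part D \<psi> \<beta>))"
            unfolding pos_part_def sum_qform_spec[OF onP onB] trace_spec[OF onB] ..
          show "\<forall>n<D. 0 \<le> qform D (neg_part D \<psi> \<beta>) (\<phi> D \<omega> n) \<and>
              qform D (neg_part D \<psi> \<beta>) (\<phi> D \<omega> n) \<le> Max (real_eigenvalues D (neg_part D \<psi> \<beta>))"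
            unfolding neg_part_def eig_spec[OF onB] using spec_bounds[OF onB onP] by auto
          show "(\<Sum>n<D. qform D (neg_part D \<psi> \<beta>) (\<phi> D \<omega> n)) = Re (mtrace D (neg_part D \<psi> \<beta>))"
            unfolding neg_part_def sum_qform_spec[OF onP onB] trace_spec[OF onB] ..
        qed
        then show ?thesis by linarith
      qed
      have part2: "Mmu D a (\<phi> D \<omega>) \<mu> (proj a \<nu>) \<ge>
            real (bdim a \<nu>) / real (bdim a \<mu>) * (1 - real (D - bdim a \<mu>) / real D powr (1 - 2 * \<tau>)) \<and>
          Mmu D a (\<phi> D \<omega>) \<mu> (proj a \<nu>) \<ge>
            1 - real (D - bdim a \<nu>) / real D powr (1 - 2 * \<tau>)" if mu: "\<mu> < K" and nu: "\<nu> < K" for \<mu> \<nu>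
      proof -
        have d: "0 < real (bdim a \<mu>)" using block_facts[OF part mu] by simp
        have p: "\<forall>n<D. 0 \<le> qform D (proj a \<mu>) (\<phi> D \<omega> n) \<and>
                 1 - real (D - bdim a \<mu>) / real D powr (1 - 2 * \<tau>) \<le> qform D (proj a \<mu>) (\<phi> D \<omega> n)"
          using PF[OF mu] by blast
        have q: "\<forall>n<D. 0 \<le> qform D (proj a \<nu>) (\<phi> D \<omega> n) \<and>
                 1 - real (D - bdim a \<nu>) / real D powr (1 - 2 * \<tau>) \<le> qform D (proj a \<nu>) (\<phi> D \<omega> n)"
          using PF[OF nu] by blast
        note B = ineqB[OF d p conjunct2[OF PF[OF mu]] q conjunct2[OF PF[OF nu]]]
        show ?thesis using B unfolding Mmu_def by simp
      qed
      show ?thesis using part1 part2 by blast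
    qed
    show ?thesis using Esets mE pointwise by blast
  qed
qed

end
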